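(* Let $\{\mathbf{x}^k,\mathbf{y}^k,\mathbf{z}^k,\boldsymbol{\lambda}^k,\theta^{(k)},\beta^{(k)}\}$ be generated by the Fast PALM algorithm. Then for every $k\ge0$ and every $\mathbf{x}$, $$\frac{1-\theta^{(k+1)}}{(\theta^{(k+1)})^2}\bigl(f(\mathbf{x}^{k+1})-f(\mathbf{x})\bigr)-\frac{1}{\theta^{(k)}}\bigl\langle\mathcal{A}^T(\boldsymbol{\lambda}^{k+1}),\mathbf{x}-\mathbf{z}^{k+1}\bigr\rangle\le\frac{1-\theta^{(k)}}{(\theta^{(k)})^2}\bigl(f(\mathbf{x}^k)-f(\mathbf{x})\bigr)+\frac{L}{2}\bigl(\|\mathbf{z}^k-\mathbf{x}\|^2-\|\mathbf{z}^{k+1}-\mathbf{x}\|^2\bigr).$$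
   Context: Setting: finite-dimensional real inner product spaces with induced norms $\|\cdot\|$. Problem: $\min_{\mathbf{x}} f(\mathbf{x})=g(\mathbf{x})+h(\mathbf{x})$ subject to $\mathcal{A}(\mathbf{x})=\mathbf{b}$, where $g,h$ are proper convex lower semicontinuous, $g$ is differentiable with $\|\nabla g(\mathbf{x})-\nabla g(\mathbf{y})\|\le L\|\mathbf{x}-\mathbf{y}\|$ for all $\mathbf{x},\mathbf{y}$ ($L>0$), $\mathcal{A}$ is linear with adjoint $\mathcal{A}^T$. Fast PALM: given $\mathbf{x}^0,\mathbf{z}^0,\boldsymbol{\lambda}^0$ and $\theta^{(0)}=\beta^{(0)}=1$, for $k=0,1,2,\dots$: $\mathbf{y}^{k+1}=(1-\theta^{(k)})\mathbf{x}^k+\theta^{(k)}\mathbf{z}^k$; $\mathbf{z}^{k+1}=\arg\min_{\mathbf{x}}\ \langle\nabla g(\mathbf{y}^{k+1}),\mathbf{x}\rangle+h(\mathbf{x})+\langle\boldsymbol{\lambda}^k,\mathcal{A}(\mathbf{x})\rangle+\frac{\beta^{(k)}}{2}\|\mathcal{A}(\mathbf{x})-\mathbf{b}\|^2+\frac{L\theta^{(k)}}{2}\|\mathbf{x}-\mathbf{z}^k\|^2$; $\mathbf{x}^{k+1}=(1-\theta^{(k)})\mathbf{x}^k+\theta^{(k)}\mathbf{z}^{k+1}$; $\boldsymbol{\lambda}^{k+1}=\boldsymbol{\lambda}^k+\beta^{(k)}(\mathcal{A}(\mathbf{z}^{k+1})-\mathbf{b})$; $\theta^{(k+1)}=\frac{-(\theta^{(k)})^2+\sqrt{(\theta^{(k)})^4+4(\theta^{(k)})^2}}{2}$;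 $\beta^{(k+1)}=1/\theta^{(k+1)}$. *)

theory Defs
  imports "HOL-Analysis.Analysis"
begin

definition proper_fun :: "('a \<Rightarrow> ereal) \<Rightarrow> bool" where
  "proper_fun h \<longleftrightarrow> (\<forall>x. h x \<noteq> -\<infinity>) \<and> (\<exists>x. h x \<noteq> \<infinity>)"

definition ext_convex :: "('a::real_vector \<Rightarrow> ereal) \<Rightarrow> bool" where
  "ext_convex h \<longleftrightarrow> (\<forall>x y t. 0 \<le> t \<and> t \<le> 1 \<longrightarrow>
      h ((1 - t) *\<^sub>R x + t *\<^sub>R y) \<le> ereal (1 - t) * h x + ereal t * h y)"

definition lsc_fun :: "('a::topological_space \<Rightarrow> ereal) \<Rightarrow> bool" where
  "lsc_fun h \<longleftrightarrow> (\<forall>c. closed {x. h x \<le> c})"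

end

theory Submission
  imports Defs
begin


lemma line_deriv:
  fixes g :: "'a::euclidean_space \<Rightarrow> real"
  assumes "\<And>u. (g has_derivative (\<lambda>v. G u \<bullet> v)) (at u)"
  shows "((\<lambda>t. g (y + t *\<^sub>R d)) has_real_derivative (G (y + t *\<^sub>R d) \<bullet> d)) (at t)"
proof -
  have "((\<lambda>t. y + t *\<^sub>R d) has_derivative (\<lambda>s. s *\<^sub>R d)) (at t)"
    by (auto intro!: derivative_eq_intros)
  from has_derivative_compose[OF this assms]
  have "((\<lambda>t. g (y + t *\<^sub>R d)) has_derivative (\<lambda>s. G (y + t *\<^sub>R d) \<bullet> (s *\<^sub>R d))) (at t)" .
  moreover have "(\<lambda>s. G (y + t *\<^sub>R d) \<bullet> (s *\<^sub>R d)) = (*) (G (y + t *\<^sub>R d) \<bullet> d)"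
    by (rule ext) (simp add: mult.commute)
  ultimately show ?thesis unfolding has_field_derivative_def by simp
qed

lemma grad_ineq:
  fixes g :: "'a::euclidean_space \<Rightarrow> real"
  assumes cvx: "convex_on UNIV g"
    and der: "\<And>u. (g has_derivative (\<lambda>v. G u \<bullet> v)) (at u)"
  shows "g v \<ge> g y + G y \<bullet> (v - y)"
proof -
  define d where "d = v - y"
  let ?p = "\<lambda>t. g (y + t *\<^sub>R d)"
  have "convex_on UNIV ?p"
  proof (rule convex_onI)
    fix t s1 s2 :: real assume "0 < t" "t < 1"
    have "y + ((1 - t) * s1 + t * s2) *\<^sub>R d = (1 - t) *\<^sub>R (y + s1 *\<^sub>R d) + t *\<^sub>R (y + s2 *\<^sub>R d)"
      by (simp add: algebra_simps)
    then show "?p ((1 - t) *\<^sub>R s1 + t *\<^sub>R s2) \<le> (1 - t) * ?p s1 + t * ?p s2"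
      using convex_onD[OF cvx, of t "y + s1 *\<^sub>R d" "y + s2 *\<^sub>R d"] \<open>0 < t\<close> \<open>t < 1\<close> by simp
  qed simp
  from convex_on_imp_above_tangent[OF this, of 0 1 "G y \<bullet> d"] line_deriv[OF der, of y d 0]
  have "?p 1 - ?p 0 \<ge> G y \<bullet> d" by simp
  then show ?thesis by (simp add: d_def)
qed

lemma descent:
  fixes g :: "'a::euclidean_space \<Rightarrow> real"
  assumes der: "\<And>u. (g has_derivative (\<lambda>v. G u \<bullet> v)) (at u)"
    and lip: "\<And>u v. norm (G u - G v) \<le> L * norm (u - v)"
  shows "g v \<le> g y + G y \<bullet> (v - y) + L / 2 * (norm (v - y))\<^sup>2"
proof -
  define d where "d = v - y"
  define \<phi> where "\<phi> t = g (y + t *\<^sub>R d) - t * (G y \<bullet> d) - L / 2 * t\<^sup>2 * (norm d)\<^sup>2" for t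
  have "\<phi> 0 \<ge> \<phi> 1"
  proof (rule DERIV_nonpos_imp_nonincreasing[of 0 1 \<phi>])
    show "(0::real) \<le> 1" by simp
  next
    fix t :: real assume t: "0 \<le> t" "t \<le> 1"
    have D: "(\<phi> has_real_derivative (G (y + t *\<^sub>R d) \<bullet> d - G y \<bullet> d - L * t * (norm d)\<^sup>2)) (at t)"
      unfolding \<phi>_def
      by (rule derivative_eq_intros line_deriv[OF der] refl | simp)+
    have "G (y + t *\<^sub>R d) \<bullet> d - G y \<bullet> d = (G (y + t *\<^sub>R d) - G y) \<bullet> d"
      by (simp add: inner_diff_left)
    also have "\<dots> \<le> norm (G (y + t *\<^sub>R d) - G y) * norm d"
      by (rule norm_cauchy_schwarz)
    also have "\<dots> \<le> L * norm (t *\<^sub>R d) * norm d"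
      using lip[of "y + t *\<^sub>R d" y] by (simp add: mult_right_mono)
    also have "\<dots> = L * t * (norm d)\<^sup>2" using t by (simp add: power2_eq_square)
    finally show "\<exists>y. (\<phi> has_real_derivative y) (at t) \<and> y \<le> 0" using D by force
  qed
  then show ?thesis by (simp add: \<phi>_def d_def)
qed

lemma lim_small:
  fixes a b C :: real
  assumes "\<And>t. 0 < t \<Longrightarrow> t \<le> 1 \<Longrightarrow> a \<le> b + t * C"
  shows "a \<le> b"
proof (rule ccontr)
  assume "\<not> a \<le> b"
  show False
  proof (cases "C \<le> 0")
    case True then show False using assms[of 1] \<open>\<not> a \<le> b\<close> by simp
  next
    case False
    define t where "t = min 1 ((a - b) / (2 * C))"
    have "0 < t" "t \<le> 1" using False \<open>\<not> a \<le> b\<close> by (auto simp: t_def)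
    have "t \<le> (a - b) / (2 * C)" by (simp add: t_def)
    hence "t * C \<le> (a - b) / (2 * C) * C" using False by (intro mult_right_mono) auto
    also have "\<dots> = (a - b) / 2" using False by simp
    finally have "t * C \<le> (a - b) / 2" .
    then show False using assms[OF \<open>0 < t\<close> \<open>t \<le> 1\<close>] \<open>\<not> a \<le> b\<close> by simp
  qed
qed

lemma norm_add_sq:
  fixes a d :: "'a::real_inner"
  shows "(norm (a + t *\<^sub>R d))\<^sup>2 = (norm a)\<^sup>2 + 2 * t * (a \<bullet> d) + t\<^sup>2 * (norm d)\<^sup>2"
  unfolding power2_norm_eq_inner by (simp add: inner_add_left inner_add_right inner_commute algebra_simps power2_eq_square)

lemma theta_step:
  fixes a b :: real
  assumes "0 < a" "b = (- a\<^sup>2 + sqrt (a ^ 4 + 4 * a\<^sup>2)) / 2"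
  shows "0 < b \<and> b < 1 \<and> b\<^sup>2 = a\<^sup>2 * (1 - b)"
proof -
  define s where "s = sqrt (a ^ 4 + 4 * a\<^sup>2)"
  have s0: "s \<ge> 0" unfolding s_def by simp
  have s2: "s\<^sup>2 = a ^ 4 + 4 * a\<^sup>2" unfolding s_def by (simp add: add_nonneg_nonneg)
  have "s\<^sup>2 > (a\<^sup>2)\<^sup>2" using s2 assms(1) by (simp add: power_mult_distrib power4_eq_xxxx power2_eq_square)
  hence sg: "s > a\<^sup>2" using s0 by (smt (verit) power_mono zero_le_power2)
  have b: "b = (s - a\<^sup>2) / 2" using assms(2) s_def by simp
  have b0: "0 < b" using b sg by simp
  have eq: "b\<^sup>2 = a\<^sup>2 * (1 - b)" unfolding b using s2
    by (simp add: power2_eq_square power4_eq_xxxx field_simps)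
  have "a\<^sup>2 * (1 - b) > 0" using eq b0 by (metis power2_less_0 zero_less_power2 linorder_neqE_linordered_idom less_irrefl)
  hence "b < 1" using assms(1) by (simp add: zero_less_mult_iff)
  thus ?thesis using b0 eq by simp
qed

lemma opt_cond:
  fixes h :: "'a::euclidean_space \<Rightarrow> ereal" and A :: "'a \<Rightarrow> 'b::euclidean_space"
  assumes lin: "linear A" and cvx: "ext_convex h"
    and mn: "\<And>u. ereal (G \<bullet> u + lam \<bullet> A u + \<beta> / 2 * (norm (A u - b))\<^sup>2 + c / 2 * (norm (u - z))\<^sup>2) + h u
              \<ge> ereal (G \<bullet> z' + lam \<bullet> A z' + \<beta> / 2 * (norm (A z' - b))\<^sup>2 + c / 2 * (norm (z' - z))\<^sup>2) + h z'"
    and c0: "c \<ge> 0" and b0: "\<beta> \<ge> 0"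
    and hz: "h z' = ereal hz" and hw: "h w = ereal hw"
  shows "hz - hw \<le> (G + adjoint A (lam + \<beta> *\<^sub>R (A z' - b))) \<bullet> (w - z') + c * ((z' - z) \<bullet> (w - z'))"
proof -
  define q where "q u = G \<bullet> u + lam \<bullet> A u + \<beta> / 2 * (norm (A u - b))\<^sup>2 + c / 2 * (norm (u - z))\<^sup>2" for u
  define d where "d = w - z'"
  define D where "D = (G + adjoint A (lam + \<beta> *\<^sub>R (A z' - b))) \<bullet> d + c * ((z' - z) \<bullet> d)"
  define C where "C = \<beta> / 2 * (norm (A d))\<^sup>2 + c / 2 * (norm d)\<^sup>2"
  have Dexp: "D = G \<bullet> d + lam \<bullet> A d + \<beta> * ((A z' - b) \<bullet> A d) + c * ((z' - z) \<bullet> d)"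
    unfolding D_def using adjoint_works[OF lin, of d "lam + \<beta> *\<^sub>R (A z' - b)"]
    by (simp add: inner_add_left inner_add_right inner_commute)
  have qexp: "q (z' + t *\<^sub>R d) = q z' + t * D + t\<^sup>2 * C" for t
  proof -
    have A1: "A (z' + t *\<^sub>R d) - b = (A z' - b) + t *\<^sub>R A d"
      using lin by (simp add: linear_add linear_scale)
    have A2: "z' + t *\<^sub>R d - z = (z' - z) + t *\<^sub>R d" by simp
    have A3: "A (z' + t *\<^sub>R d) = A z' + t *\<^sub>R A d" using lin by (simp add: linear_add linear_scale)
    have N1: "(norm (A (z' + t *\<^sub>R d) - b))\<^sup>2 = (norm (A z' - b))\<^sup>2 + 2 * t * ((A z' - b) \<bullet> A d) + t\<^sup>2 * (norm (A d))\<^sup>2"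
      by (simp only: A1 norm_add_sq)
    have N2: "(norm (z' + t *\<^sub>R d - z))\<^sup>2 = (norm (z' - z))\<^sup>2 + 2 * t * ((z' - z) \<bullet> d) + t\<^sup>2 * (norm d)\<^sup>2"
      by (simp only: A2 norm_add_sq)
    show ?thesis unfolding q_def N1 N2 unfolding A3 Dexp C_def
      by (simp add: inner_add_right inner_add_left algebra_simps power2_eq_square)
  qed
  have "hz - hw \<le> D + t * C" if t: "0 < t" "t \<le> 1" for t
  proof -
    have u: "(1 - t) *\<^sub>R z' + t *\<^sub>R w = z' + t *\<^sub>R d" by (simp add: d_def algebra_simps)
    have "h (z' + t *\<^sub>R d) \<le> ereal (1 - t) * h z' + ereal t * h w"
      using cvx t unfolding ext_convex_def u[symmetric] by auto
    also have "\<dots> = ereal ((1 - t) * hz + t * hw)" by (simp add: hz hw)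
    finally have hu: "h (z' + t *\<^sub>R d) \<le> ereal ((1 - t) * hz + t * hw)" .
    have "ereal (q z' + hz) \<le> ereal (q (z' + t *\<^sub>R d)) + h (z' + t *\<^sub>R d)"
      using mn[of "z' + t *\<^sub>R d"] hz unfolding q_def by simp
    also have "\<dots> \<le> ereal (q (z' + t *\<^sub>R d)) + ereal ((1 - t) * hz + t * hw)"
      using hu by (rule add_left_mono)
    finally have "q z' + hz \<le> q (z' + t *\<^sub>R d) + ((1 - t) * hz + t * hw)" by simp
    hence "t * (hz - hw) \<le> t * (D + t * C)" unfolding qexp by (simp add: algebra_simps power2_eq_square)
    thus ?thesis using t by simp
  qed
  hence "hz - hw \<le> D" by (rule lim_small)
  thus ?thesis unfolding D_def d_def .
qed


lemma nid_gen:
  fixes a b c :: "'a::real_inner"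
  shows "(norm (c - a))\<^sup>2 - (norm (b - a))\<^sup>2 = (norm (b - c))\<^sup>2 + 2 * ((b - c) \<bullet> (a - b))"
  unfolding power2_norm_eq_inner
  by (simp add: inner_diff_left inner_diff_right inner_commute algebra_simps)

lemma final_real:
  fixes \<theta> L gx' gy P1 P2 P3 N1 N2 N3 gxk gw hx' hxk hz hw Q R :: real
  assumes th: "0 < \<theta>" "\<theta> \<le> 1"
    and gx': "gx' \<le> gy + ((1 - \<theta>) * P1 + \<theta> * (P2 + P3)) + L / 2 * (\<theta>\<^sup>2 * N1)"
    and g1: "gy + P1 \<le> gxk" and g2: "gy + P2 \<le> gw"
    and hh: "hx' \<le> (1 - \<theta>) * hxk + \<theta> * hz"
    and op: "hz - hw \<le> - P3 + Q + L * \<theta> * R"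
    and nid: "N2 - N3 = N1 + 2 * R"
  shows "1 / \<theta>\<^sup>2 * (gx' + hx' - (gw + hw)) - 1 / \<theta> * Q
         \<le> (1 - \<theta>) / \<theta>\<^sup>2 * (gxk + hxk - (gw + hw)) + L / 2 * (N2 - N3)"
proof -
  have a: "(1 - \<theta>) * (gy + P1) \<le> (1 - \<theta>) * gxk" using g1 th by (intro mult_left_mono) auto
  have b: "\<theta> * (gy + P2) \<le> \<theta> * gw" using g2 th by (intro mult_left_mono) auto
  have c: "\<theta> * (hz - hw) \<le> \<theta> * (- P3 + Q + L * \<theta> * R)" using op th by (intro mult_left_mono) auto
  have key: "gx' + hx' - (gw + hw) \<le> (1 - \<theta>) * (gxk + hxk - (gw + hw)) + \<theta> * Q + \<theta>\<^sup>2 * (L / 2 * (N2 - N3))"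
    using gx' hh a b c nid by (simp add: algebra_simps power2_eq_square)
  have "1 / \<theta>\<^sup>2 * (gx' + hx' - (gw + hw)) \<le> 1 / \<theta>\<^sup>2 * ((1 - \<theta>) * (gxk + hxk - (gw + hw)) + \<theta> * Q + \<theta>\<^sup>2 * (L / 2 * (N2 - N3)))"
    using key by (intro mult_left_mono) auto
  also have "\<dots> = (1 - \<theta>) / \<theta>\<^sup>2 * (gxk + hxk - (gw + hw)) + 1 / \<theta> * Q + L / 2 * (N2 - N3)"
    using th by (simp add: field_simps power2_eq_square)
  finally show ?thesis by simp
qed


theorem proposition1:
  fixes g :: "'a::euclidean_space \<Rightarrow> real"
    and gradg :: "'a \<Rightarrow> 'a"
    and h :: "'a \<Rightarrow> ereal"
    and A :: "'a \<Rightarrow> 'b::euclidean_space"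
    and b :: 'b
    and L :: real
    and x y z :: "nat \<Rightarrow> 'a"
    and lam :: "nat \<Rightarrow> 'b"
    and \<theta> \<beta> :: "nat \<Rightarrow> real"
    and f :: "'a \<Rightarrow> ereal"
  assumes g_convex: "convex_on UNIV g"
    and g_grad: "\<And>u. (g has_derivative (\<lambda>v. gradg u \<bullet> v)) (at u)"
    and L_pos: "L > 0"
    and g_lip: "\<And>u v. norm (gradg u - gradg v) \<le> L * norm (u - v)"
    and h_proper: "proper_fun h"
    and h_convex: "ext_convex h"
    and h_lsc: "lsc_fun h"
    and f_def: "\<And>u. f u = ereal (g u) + h u"
    and A_linear: "linear A"
    and \<theta>0: "\<theta> 0 = 1"
    and \<beta>0: "\<beta> 0 = 1"
    and y_step: "\<And>k. y (Suc k) = (1 - \<theta> k) *\<^sub>R x k + \<theta> k *\<^sub>R z k"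
    and z_step: "\<And>k. is_arg_min
        (\<lambda>u. ereal (gradg (y (Suc k)) \<bullet> u + lam k \<bullet> A u
                + \<beta> k / 2 * (norm (A u - b))\<^sup>2
                + L * \<theta> k / 2 * (norm (u - z k))\<^sup>2) + h u)
        (\<lambda>_. True) (z (Suc k))"
    and x_step: "\<And>k. x (Suc k) = (1 - \<theta> k) *\<^sub>R x k + \<theta> k *\<^sub>R z (Suc k)"
    and lam_step: "\<And>k. lam (Suc k) = lam k + \<beta> k *\<^sub>R (A (z (Suc k)) - b)"
    and \<theta>_step: "\<And>k. \<theta> (Suc k) = (- (\<theta> k)\<^sup>2 + sqrt ((\<theta> k) ^ 4 + 4 * (\<theta> k)\<^sup>2)) / 2"
    and \<beta>_step: "\<And>k. \<beta> (Suc k) = 1 / \<theta> (Suc k)"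
  shows "ereal ((1 - \<theta> (Suc k)) / (\<theta> (Suc k))\<^sup>2) * (f (x (Suc k)) - f w)
           - ereal (1 / \<theta> k * (adjoint A (lam (Suc k)) \<bullet> (w - z (Suc k))))
         \<le> ereal ((1 - \<theta> k) / (\<theta> k)\<^sup>2) * (f (x k) - f w)
           + ereal (L / 2 * ((norm (z k - w))\<^sup>2 - (norm (z (Suc k) - w))\<^sup>2))"
proof -
  have hnm: "\<And>u. h u \<noteq> -\<infinity>" using h_proper by (simp add: proper_fun_def)
  obtain u0 where u0: "h u0 \<noteq> \<infinity>" using h_proper by (auto simp: proper_fun_def)
  have th: "0 < \<theta> n \<and> \<theta> n \<le> 1" for n
  proof (cases n)
    case 0 then show ?thesis using \<theta>0 by simp
  next
    case (Suc m)
    have "0 < \<theta> m"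
    proof (induction m)
      case 0 show ?case using \<theta>0 by simp
    next
      case (Suc m) then show ?case using theta_step[OF Suc \<theta>_step[of m]] by simp
    qed
    then show ?thesis using theta_step[OF _ \<theta>_step[of m]] Suc by simp
  qed
  have thS: "0 < \<theta> (Suc n) \<and> \<theta> (Suc n) < 1 \<and> (\<theta> (Suc n))\<^sup>2 = (\<theta> n)\<^sup>2 * (1 - \<theta> (Suc n))" for n
    using theta_step[OF _ \<theta>_step[of n]] th[of n] by simp
  have bt: "\<beta> n = 1 / \<theta> n" for n by (cases n) (simp_all add: \<theta>0 \<beta>0 \<beta>_step)
  have hconv: "h ((1 - t) *\<^sub>R u + t *\<^sub>R v) \<le> ereal (1 - t) * h u + ereal t * h v"
    if "0 \<le> t" "t \<le> 1" for t u v
    using h_convex that unfolding ext_convex_def by blast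
  define \<Phi> where "\<Phi> n u = ereal (gradg (y (Suc n)) \<bullet> u + lam n \<bullet> A u
                + \<beta> n / 2 * (norm (A u - b))\<^sup>2
                + L * \<theta> n / 2 * (norm (u - z n))\<^sup>2) + h u" for n u
  have zmin: "\<Phi> n (z (Suc n)) \<le> \<Phi> n u" for n u
    using z_step[of n] unfolding is_arg_min_def \<Phi>_def by (auto simp: not_less)
  have hzfin: "h (z (Suc n)) \<noteq> \<infinity>" for n
  proof
    assume "h (z (Suc n)) = \<infinity>"
    then have "\<Phi> n (z (Suc n)) = \<infinity>" by (simp add: \<Phi>_def)
    moreover have "\<Phi> n u0 \<noteq> \<infinity>" using u0 hnm[of u0] by (cases "h u0") (auto simp: \<Phi>_def)
    ultimately show False using zmin[of n u0] by simp
  qed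
  have hxfin: "h (x (Suc n)) \<noteq> \<infinity>" for n
  proof (induction n)
    case 0
    have "x (Suc 0) = z (Suc 0)" using x_step[of 0] \<theta>0 by simp
    then show ?case using hzfin[of 0] by simp
  next
    case (Suc n)
    obtain a where a: "h (x (Suc n)) = ereal a" using Suc hnm[of "x (Suc n)"] by (cases "h (x (Suc n))") auto
    obtain c where c: "h (z (Suc (Suc n))) = ereal c" using hzfin[of "Suc n"] hnm[of "z (Suc (Suc n))"]
      by (cases "h (z (Suc (Suc n)))") auto
    have "h (x (Suc (Suc n))) \<le> ereal (1 - \<theta> (Suc n)) * h (x (Suc n)) + ereal (\<theta> (Suc n)) * h (z (Suc (Suc n)))"
      using hconv[of "\<theta> (Suc n)"] th[of "Suc n"] x_step[of "Suc n"] by simp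
    then show ?case using a c by auto
  qed
  obtain hx' where hx': "h (x (Suc k)) = ereal hx'" using hxfin[of k] hnm[of "x (Suc k)"]
    by (cases "h (x (Suc k))") auto
  obtain hz where hz: "h (z (Suc k)) = ereal hz" using hzfin[of k] hnm[of "z (Suc k)"]
    by (cases "h (z (Suc k))") auto
  have c1: "(1 - \<theta> (Suc k)) / (\<theta> (Suc k))\<^sup>2 = 1 / (\<theta> k)\<^sup>2"
  proof -
    have e: "(\<theta> (Suc k))\<^sup>2 = (\<theta> k)\<^sup>2 * (1 - \<theta> (Suc k))" and p: "1 - \<theta> (Suc k) \<noteq> 0"
      using thS[of k] by auto
    show ?thesis unfolding e using p by simp
  qed
  show ?thesis
  proof (cases "h w = \<infinity>")
    case True
    have pos: "(1 - \<theta> (Suc k)) / (\<theta> (Suc k))\<^sup>2 > 0" unfolding c1 using th[of k] by simp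
    have "f (x (Suc k)) - f w = -\<infinity>" using True hx' by (simp add: f_def)
    then have "ereal ((1 - \<theta> (Suc k)) / (\<theta> (Suc k))\<^sup>2) * (f (x (Suc k)) - f w) = -\<infinity>"
      using pos thS[of k] by simp
    then show ?thesis by (simp only:) simp
  next
    case False
    obtain hw where hw: "h w = ereal hw" using False hnm[of w] by (cases "h w") auto
    show ?thesis
    proof (cases "h (x k) = \<infinity> \<and> \<theta> k \<noteq> 1")
      case True
      have pos: "(1 - \<theta> k) / (\<theta> k)\<^sup>2 > 0" using True th[of k] by simp
      have "f (x k) - f w = \<infinity>" using True hw by (simp add: f_def)
      then have "ereal ((1 - \<theta> k) / (\<theta> k)\<^sup>2) * (f (x k) - f w) = \<infinity>"
        using pos True th[of k] by simp
      then show ?thesis by (simp only:) simp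
    next
      case False
      define hxk where "hxk = (if h (x k) = \<infinity> then 0 else real_of_ereal (h (x k)))"
      have rhs1: "ereal ((1 - \<theta> k) / (\<theta> k)\<^sup>2) * (f (x k) - f w)
          = ereal ((1 - \<theta> k) / (\<theta> k)\<^sup>2 * (g (x k) + hxk - (g w + hw)))"
      proof (cases "h (x k) = \<infinity>")
        case True then show ?thesis using False by (simp add: hxk_def f_def hw)
      next
        case F: False
        then have "h (x k) = ereal hxk" using hnm[of "x k"] by (cases "h (x k)") (auto simp: hxk_def)
        then show ?thesis by (simp add: f_def hw)
      qed
      have hh: "hx' \<le> (1 - \<theta> k) * hxk + \<theta> k * hz"
      proof (cases "h (x k) = \<infinity>")
        case True
        then have "\<theta> k = 1" using False by simp
        then have "x (Suc k) = z (Suc k)" using x_step[of k] by simp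
        then show ?thesis using hx' hz \<open>\<theta> k = 1\<close> by simp
      next
        case F: False
        then have e: "h (x k) = ereal hxk" using hnm[of "x k"] by (cases "h (x k)") (auto simp: hxk_def)
        have "h (x (Suc k)) \<le> ereal (1 - \<theta> k) * h (x k) + ereal (\<theta> k) * h (z (Suc k))"
          using hconv[of "\<theta> k"] th[of k] x_step[of k] by simp
        then show ?thesis using e hx' hz by simp
      qed
      define G where "G = gradg (y (Suc k))"
      have op: "hz - hw \<le> (G + adjoint A (lam k + \<beta> k *\<^sub>R (A (z (Suc k)) - b))) \<bullet> (w - z (Suc k))
                 + L * \<theta> k * ((z (Suc k) - z k) \<bullet> (w - z (Suc k)))"
        apply (rule opt_cond[OF A_linear h_convex _ _ _ hz hw])
        subgoal for u using zmin[of k u] unfolding \<Phi>_def G_def by simp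
        using th[of k] L_pos bt[of k] by auto
      have gx': "g (x (Suc k)) \<le> g (y (Suc k)) + G \<bullet> (x (Suc k) - y (Suc k)) + L / 2 * (norm (x (Suc k) - y (Suc k)))\<^sup>2"
        unfolding G_def by (rule descent[OF g_grad g_lip])
      have g1: "g (y (Suc k)) + G \<bullet> (x k - y (Suc k)) \<le> g (x k)"
        unfolding G_def by (rule grad_ineq[OF g_convex g_grad])
      have g2: "g (y (Suc k)) + G \<bullet> (w - y (Suc k)) \<le> g w"
        unfolding G_def by (rule grad_ineq[OF g_convex g_grad])
      have d1: "x (Suc k) - y (Suc k) = (1 - \<theta> k) *\<^sub>R (x k - y (Suc k)) + \<theta> k *\<^sub>R ((w - y (Suc k)) + (z (Suc k) - w))"
        unfolding x_step[of k] y_step[of k] by (simp add: algebra_simps)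
      have d2: "x (Suc k) - y (Suc k) = \<theta> k *\<^sub>R (z (Suc k) - z k)"
        unfolding x_step[of k] y_step[of k] by (simp add: algebra_simps)
      have gx'': "g (x (Suc k)) \<le> g (y (Suc k)) + ((1 - \<theta> k) * (G \<bullet> (x k - y (Suc k))) + \<theta> k * (G \<bullet> (w - y (Suc k)) + G \<bullet> (z (Suc k) - w)))
             + L / 2 * ((\<theta> k)\<^sup>2 * (norm (z (Suc k) - z k))\<^sup>2)"
      proof -
        have "G \<bullet> (x (Suc k) - y (Suc k)) = (1 - \<theta> k) * (G \<bullet> (x k - y (Suc k))) + \<theta> k * (G \<bullet> (w - y (Suc k)) + G \<bullet> (z (Suc k) - w))"
          by (subst d1) (simp add: inner_add_right inner_diff_right)
        moreover have "(norm (x (Suc k) - y (Suc k)))\<^sup>2 = (\<theta> k)\<^sup>2 * (norm (z (Suc k) - z k))\<^sup>2"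
          by (subst d2) (simp add: power_mult_distrib)
        ultimately show ?thesis using gx' by simp
      qed
      have op': "hz - hw \<le> - (G \<bullet> (z (Suc k) - w)) + adjoint A (lam (Suc k)) \<bullet> (w - z (Suc k))
                 + L * \<theta> k * ((z (Suc k) - z k) \<bullet> (w - z (Suc k)))"
      proof -
        have "G \<bullet> (w - z (Suc k)) = - (G \<bullet> (z (Suc k) - w))" by (simp add: inner_diff_right)
        then show ?thesis using op lam_step[of k] by (simp add: inner_add_left)
      qed
      have nid: "(norm (z k - w))\<^sup>2 - (norm (z (Suc k) - w))\<^sup>2
          = (norm (z (Suc k) - z k))\<^sup>2 + 2 * ((z (Suc k) - z k) \<bullet> (w - z (Suc k)))"
        by (rule nid_gen)
      have R: "1 / (\<theta> k)\<^sup>2 * (g (x (Suc k)) + hx' - (g w + hw)) - 1 / \<theta> k * (adjoint A (lam (Suc k)) \<bullet> (w - z (Suc k)))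
         \<le> (1 - \<theta> k) / (\<theta> k)\<^sup>2 * (g (x k) + hxk - (g w + hw)) + L / 2 * ((norm (z k - w))\<^sup>2 - (norm (z (Suc k) - w))\<^sup>2)"
        by (rule final_real[OF _ _ gx'' g1 g2 hh op' nid]) (use th[of k] in auto)
      show ?thesis unfolding rhs1 c1 using R by (simp add: f_def hx' hw)
    qed
  qed
qed

end
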